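(* Each of the following functions $\varrho:\mathbb{R}\to\mathbb{R}$ is continuous and increasing, is differentiable at some $x_0$ with $\varrho'(x_0)\neq0$, is differentiable on $(-\infty,-r)\cup(r,\infty)$ for some $r>0$, and moreover either is bounded, or there are $\lambda,\lambda'\ge0$ with $\lambda\neq\lambda'$ such that $\varrho'(x)\to\lambda$ as $x\to\infty$ and $\varrho'(x)\to\lambda'$ as $x\to-\infty$: the ReLU $\max\{0,x\}$; the parametric ReLU $\max\{ax,x\}$ with $a\ge0$, $a\ne1$; the exponential linear unit $x\chi_{x\ge0}(x)+(e^x-1)\chi_{x<0}(x)$; the softsign $x/(1+|x|)$; the inverse square root linear unit $x\chi_{x\ge0}(x)+\frac{x}{\sqrt{1+ax^2}}\chi_{x<0}(x)$ with $a>0$; the inverse square root unit $x/\sqrt{1+ax^2}$ with $a>0$; the sigmoid $1/(1+e^{-x})$; $\tanh$; $\arctan$; and the softplus $\ln(1+e^x)$. Consequently, for each such $\varrho$, every $B>0$, every finite Borel measure $\mu$ on $[-B,B]^d$ with uncountable support, and every architecture $S=(d,N_1,\dots,N_{L-1},1)$ with $L\ge2$ and with $N_{L-1}\ge1$ if $\varrho$ is bounded and $N_{L-1}\ge 2$ otherwise, the set $\mathcal{RNN}_\varrho^{[-B,B]^d}(S)$ is not closed in $L^p(\mu)$ for any $p\in(0,\infty)$.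
   Context: A neural network with architecture $S=(N_0,\dots,N_L)$ ($N_0=d$) is a family $\Phi=((A_\ell,b_\ell))_{\ell=1}^L$, $A_\ell\in\mathbb{R}^{N_\ell\times N_{\ell-1}}$, $b_\ell\in\mathbb{R}^{N_\ell}$; $\mathcal{NN}(S)$ is the set of these. For $\varrho:\mathbb{R}\to\mathbb{R}$ and $\Omega\subset\mathbb{R}^d$, $\mathrm{R}_\varrho^\Omega(\Phi):\Omega\to\mathbb{R}^{N_L}$, $x\mapsto x_L$, where $x_0=x$, $x_\ell=\varrho(A_\ell x_{\ell-1}+b_\ell)$ for $1\le\ell\le L-1$ (componentwise), $x_L=A_Lx_{L-1}+b_L$; $\mathcal{RNN}_\varrho^\Omega(S)=\{\mathrm{R}_\varrho^\Omega(\Phi):\Phi\in\mathcal{NN}(S)\}$. *)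

theory Defs
  imports "HOL-Analysis.Analysis"
begin

definition relu :: "real \<Rightarrow> real" where
  "relu x = max 0 x"

definition prelu :: "real \<Rightarrow> real \<Rightarrow> real" where
  "prelu a x = max (a * x) x"

definition elu :: "real \<Rightarrow> real" where
  "elu x = (if x \<ge> 0 then x else exp x - 1)"

definition softsign :: "real \<Rightarrow> real" where
  "softsign x = x / (1 + \<bar>x\<bar>)"

definition isrlu :: "real \<Rightarrow> real \<Rightarrow> real" where
  "isrlu a x = (if x \<ge> 0 then x else x / sqrt (1 + a * x\<^sup>2))"

definition isru :: "real \<Rightarrow> real \<Rightarrow> real" where
  "isru a x = x / sqrt (1 + a * x\<^sup>2)"

definition sigmoid :: "real \<Rightarrow> real" where
  "sigmoid x = 1 / (1 + exp (- x))"

definition softplus :: "real \<Rightarrow> real" where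
  "softplus x = ln (1 + exp x)"

definition listed_activations :: "(real \<Rightarrow> real) set" where
  "listed_activations =
     {relu, elu, softsign, sigmoid, tanh, arctan, softplus}
     \<union> {prelu a | a. a \<ge> 0 \<and> a \<noteq> 1}
     \<union> {isrlu a | a. a > 0}
     \<union> {isru a | a. a > 0}"

definition admissible_activation :: "(real \<Rightarrow> real) \<Rightarrow> bool" where
  "admissible_activation \<rho> \<longleftrightarrow>
     continuous_on UNIV \<rho> \<and> mono \<rho> \<and>
     (\<exists>x0 D. (\<rho> has_real_derivative D) (at x0) \<and> D \<noteq> 0) \<and>
     (\<exists>r>0. \<forall>x. \<bar>x\<bar> > r \<longrightarrow> \<rho> differentiable (at x)) \<and>
     (bounded (range \<rho>) \<or>
      (\<exists>l1 l2. l1 \<ge> 0 \<and> l2 \<ge> 0 \<and> l1 \<noteq> l2 \<and>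
         ((deriv \<rho>) \<longlongrightarrow> l1) at_top \<and> ((deriv \<rho>) \<longlongrightarrow> l2) at_bot))"

text \<open>A layer (A, b) between hidden layers: A is indexed (i,j) with i < N_l, j < N_(l-1);
  b indexed by i < N_l. Entries outside these ranges are irrelevant.
  The first layer has weights indexed by (i, k) with i < N_1 and k :: 'd ranging over
  the coordinates of the input space R^d = real^'d (d = CARD('d)).\<close>

type_synonym layer = "(nat \<Rightarrow> nat \<Rightarrow> real) \<times> (nat \<Rightarrow> real)"
type_synonym 'd network = "((nat \<Rightarrow> 'd \<Rightarrow> real) \<times> (nat \<Rightarrow> real)) \<times> layer list"

text \<open>apply_layers rho ns ls v: ns lists the input widths of the layers in ls;
  the activation is applied after every layer except the last one.\<close>
fun apply_layers :: "(real \<Rightarrow> real) \<Rightarrow> nat list \<Rightarrow> layer list \<Rightarrow> (nat \<Rightarrow> real) \<Rightarrow> (nat \<Rightarrow> real)" where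
  "apply_layers \<rho> (n # ns) ((A, b) # ls) v =
     (let w = (\<lambda>i. (\<Sum>j<n. A i j * v j) + b i)
      in if ls = [] then w else apply_layers \<rho> ns ls (\<lambda>i. \<rho> (w i)))"
| "apply_layers \<rho> _ _ v = v"

text \<open>Realization of a network with architecture (d, Ns!0, ..., last Ns, 1), i.e.
  L = length Ns + 1 layers (requires Ns nonempty, i.e. L \<ge> 2); the scalar output is
  component 0 of the output vector in R^1.\<close>
definition realize :: "(real \<Rightarrow> real) \<Rightarrow> nat list \<Rightarrow> 'd::finite network \<Rightarrow> real^'d \<Rightarrow> real" where
  "realize \<rho> Ns \<Phi> x =
     (let ((A1, b1), ls) = \<Phi>;
          h1 = (\<lambda>i. \<rho> ((\<Sum>k\<in>UNIV. A1 i k * x $ k) + b1 i))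
      in apply_layers \<rho> Ns ls h1 0)"

definition RNN :: "(real \<Rightarrow> real) \<Rightarrow> nat list \<Rightarrow> (real^'d::finite \<Rightarrow> real) set" where
  "RNN \<rho> Ns = {realize \<rho> Ns \<Phi> | \<Phi>. length (snd \<Phi>) = length Ns}"

definition cube :: "real \<Rightarrow> (real^'d::finite) set" where
  "cube B = {x. \<forall>i. \<bar>x $ i\<bar> \<le> B}"

definition support :: "'a::topological_space measure \<Rightarrow> 'a set" where
  "support \<mu> = {x. \<forall>U. open U \<and> x \<in> U \<longrightarrow> emeasure \<mu> U > 0}"

text \<open>F is closed in L^p(mu) (0 < p < \<infinity>): every L^p-limit of a sequence in F coincides
  mu-a.e. with an element of F. (For p < 1 the topology is given by the metric
  \<integral>|f-g|^p; in all cases it is metrizable, so sequential closedness is closedness.)\<close>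
definition Lp_closed :: "'a measure \<Rightarrow> real \<Rightarrow> ('a \<Rightarrow> real) set \<Rightarrow> bool" where
  "Lp_closed \<mu> p F \<longleftrightarrow>
     (\<forall>g f. (\<forall>n. g n \<in> F) \<longrightarrow> f \<in> borel_measurable \<mu> \<longrightarrow>
        (\<integral>\<^sup>+ x. ennreal (\<bar>f x\<bar> powr p) \<partial>\<mu>) < \<infinity> \<longrightarrow>
        ((\<lambda>n. \<integral>\<^sup>+ x. ennreal (\<bar>g n x - f x\<bar> powr p) \<partial>\<mu>) \<longlonglongrightarrow> 0) \<longrightarrow>
        (\<exists>h\<in>F. AE x in \<mu>. h x = f x))"

end

theory Submission
  imports Defs "HOL-Real_Asymp.Real_Asymp"
begin

lemma apply_layers_cont:
  fixes v :: "'a::topological_space \<Rightarrow> nat \<Rightarrow> real"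
  assumes rc: "continuous_on UNIV \<rho>"
  shows "(\<And>i. continuous_on UNIV (\<lambda>x. v x i)) \<Longrightarrow> continuous_on UNIV (\<lambda>x. apply_layers \<rho> ns ls (v x) i)"
proof (induction ns arbitrary: ls v i)
  case Nil
  then show ?case by simp
next
  case (Cons m ns)
  show ?case
  proof (cases ls)
    case Nil
    then show ?thesis using Cons.prems by simp
  next
    case (Cons l ls')
    obtain A b where l: "l = (A, b)" by fastforce
    have w: "\<And>i. continuous_on UNIV (\<lambda>x. (\<Sum>j<m. A i j * v x j) + b i)"
      using Cons.prems by (intro continuous_intros) auto
    show ?thesis
    proof (cases "ls' = []")
      case True
      then show ?thesis using w by (simp add: Cons l)
    next
      case False
      have "\<And>i. continuous_on UNIV (\<lambda>x. \<rho> ((\<Sum>j<m. A i j * v x j) + b i))"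
        by (rule continuous_on_compose2[OF rc w]) auto
      then have "continuous_on UNIV (\<lambda>x. apply_layers \<rho> ns ls' (\<lambda>i. \<rho> ((\<Sum>j<m. A i j * v x j) + b i)) i)"
        by (rule Cons.IH)
      then show ?thesis using False by (simp add: Cons l Let_def)
    qed
  qed
qed

lemma realize_cont:
  assumes rc: "continuous_on UNIV \<rho>"
  shows "continuous_on UNIV (realize \<rho> Ns \<Phi>)"
proof -
  obtain A1 b1 ls where P: "\<Phi> = ((A1, b1), ls)" by (metis prod.collapse)
  have h: "\<And>i. continuous_on UNIV (\<lambda>x::real^'a. \<rho> ((\<Sum>k\<in>UNIV. A1 i k * x $ k) + b1 i))"
    by (rule continuous_on_compose2[OF rc]) (auto intro!: continuous_intros)
  have "continuous_on UNIV (\<lambda>x::real^'a. apply_layers \<rho> Ns ls (\<lambda>i. \<rho> ((\<Sum>k\<in>UNIV. A1 i k * x $ k) + b1 i)) 0)"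
    by (rule apply_layers_cont[OF rc h])
  moreover have "realize \<rho> Ns \<Phi> = (\<lambda>x. apply_layers \<rho> Ns ls (\<lambda>i. \<rho> ((\<Sum>k\<in>UNIV. A1 i k * x $ k) + b1 i)) 0)"
    by (rule ext) (simp add: realize_def P Let_def)
  ultimately show ?thesis by simp
qed

lemma RNN_cont: "continuous_on UNIV \<rho> \<Longrightarrow> h \<in> RNN \<rho> Ns \<Longrightarrow> continuous_on UNIV h"
  unfolding RNN_def using realize_cont by blast

lemma sum_first: "(m::nat) \<ge> 1 \<Longrightarrow> (\<Sum>j<m. (if j = 0 then c else 0) * v j) = c * (v 0::real)"
proof -
  assume m: "m \<ge> 1"
  have "(\<Sum>j<m. (if j = 0 then c else 0) * v j) = (\<Sum>j<m. if j = 0 then c * v 0 else 0)"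
    by (rule sum.cong) auto
  also have "\<dots> = c * v 0" using m by (simp add: sum.delta)
  finally show ?thesis .
qed

lemma final_layer:
  assumes "m \<ge> 1" "m \<ge> 2 \<or> w1 = 0"
  shows "apply_layers \<rho> [m] [(\<lambda>i j. if j = 0 then w0 else if j = 1 then w1 else 0, \<lambda>i. 0)] v 0
     = w0 * v 0 + w1 * v 1"
proof -
  have "(\<Sum>j<m. (if j = 0 then w0 else if j = 1 then w1 else 0) * v j)
      = (\<Sum>j<m. (if j = 0 then w0 * v 0 else 0) + (if j = 1 then w1 * v 1 else 0))"
    by (rule sum.cong) auto
  also have "\<dots> = w0 * v 0 + w1 * v 1" using assms by (auto simp add: sum.distrib sum.delta)
  finally show ?thesis by simp
qed

definition Pm :: "(real \<Rightarrow> real) \<Rightarrow> real \<Rightarrow> real \<Rightarrow> real" where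
  "Pm \<rho> x0 u = \<rho> (u - \<rho> x0 + x0)"

lemma mid_layers:
  "length ns \<ge> 2 \<Longrightarrow> (\<forall>m\<in>set ns. m \<ge> 1) \<Longrightarrow> (last ns \<ge> 2 \<or> w1 = 0) \<Longrightarrow>
   \<exists>ls. length ls = length ns \<and> (\<forall>v. apply_layers \<rho> ns ls v 0 =
      w0 * \<rho> (n * ((Pm \<rho> x0 ^^ (length ns - 2)) (v 0) - \<rho> x0) + e0)
    + w1 * \<rho> (n * ((Pm \<rho> x0 ^^ (length ns - 2)) (v 0) - \<rho> x0) + e1))"
proof (induction ns)
  case Nil
  then show ?case by simp
next
  case (Cons m ms)
  show ?case
  proof (cases "length ms = 1")
    case True
    then obtain m2 where ms: "ms = [m2]" by (cases ms) auto
    define out where "out = ((\<lambda>i j. if j = 0 then w0 else if j = 1 then w1 else 0, \<lambda>i. 0) :: layer)"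
    define lay where "lay = ((\<lambda>i j. if j = 0 then n else 0, \<lambda>i. (if i = 0 then e0 else e1) - n * \<rho> x0) :: layer)"
    have m: "m \<ge> 1" "m2 \<ge> 1" "m2 \<ge> 2 \<or> w1 = 0" using Cons.prems ms by auto
    show ?thesis
    proof (intro exI[of _ "[lay, out]"] conjI allI)
      show "length [lay, out] = length (m # ms)" using ms by simp
      fix v
      have "apply_layers \<rho> (m # ms) [lay, out] v 0 =
         apply_layers \<rho> [m2] [out] (\<lambda>i. \<rho> (n * v 0 + ((if i = 0 then e0 else e1) - n * \<rho> x0))) 0"
        using sum_first[OF m(1), of n v] by (simp add: ms lay_def out_def)
      also have "\<dots> = w0 * \<rho> (n * v 0 + (e0 - n * \<rho> x0)) + w1 * \<rho> (n * v 0 + (e1 - n * \<rho> x0))"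
        unfolding out_def by (subst final_layer[OF m(2,3)]) simp
      finally show "apply_layers \<rho> (m # ms) [lay, out] v 0 =
      w0 * \<rho> (n * ((Pm \<rho> x0 ^^ (length (m # ms) - 2)) (v 0) - \<rho> x0) + e0)
    + w1 * \<rho> (n * ((Pm \<rho> x0 ^^ (length (m # ms) - 2)) (v 0) - \<rho> x0) + e1)"
        using ms by (simp add: algebra_simps)
    qed
  next
    case False
    then have len: "length ms \<ge> 2" using Cons.prems by auto
    then have "ms \<noteq> []" by auto
    then have "last (m # ms) = last ms" by simp
    then obtain ls' where ls': "length ls' = length ms" and
      eq: "\<And>v. apply_layers \<rho> ms ls' v 0 =
      w0 * \<rho> (n * ((Pm \<rho> x0 ^^ (length ms - 2)) (v 0) - \<rho> x0) + e0)
    + w1 * \<rho> (n * ((Pm \<rho> x0 ^^ (length ms - 2)) (v 0) - \<rho> x0) + e1)"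
      using Cons.IH[OF len] Cons.prems by auto
    define lay where "lay = ((\<lambda>i j. if j = 0 then 1 else 0, \<lambda>i. x0 - \<rho> x0) :: layer)"
    have m: "m \<ge> 1" using Cons.prems by auto
    have ne: "ls' \<noteq> []" using ls' len by auto
    have ln: "length (m # ms) - 2 = Suc (length ms - 2)" using len by simp
    show ?thesis
    proof (intro exI[of _ "lay # ls'"] conjI allI)
      show "length (lay # ls') = length (m # ms)" using ls' by simp
      fix v
      have "apply_layers \<rho> (m # ms) (lay # ls') v 0 =
         apply_layers \<rho> ms ls' (\<lambda>i. Pm \<rho> x0 (v 0)) 0"
        using sum_first[OF m, of 1 v] ne by (simp add: lay_def Pm_def algebra_simps)
      also have "\<dots> = w0 * \<rho> (n * ((Pm \<rho> x0 ^^ (length (m # ms) - 2)) (v 0) - \<rho> x0) + e0)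
    + w1 * \<rho> (n * ((Pm \<rho> x0 ^^ (length (m # ms) - 2)) (v 0) - \<rho> x0) + e1)"
        unfolding eq ln funpow_Suc_right by simp
      finally show "apply_layers \<rho> (m # ms) (lay # ls') v 0 =
      w0 * \<rho> (n * ((Pm \<rho> x0 ^^ (length (m # ms) - 2)) (v 0) - \<rho> x0) + e0)
    + w1 * \<rho> (n * ((Pm \<rho> x0 ^^ (length (m # ms) - 2)) (v 0) - \<rho> x0) + e1)" .
    qed
  qed
qed


definition Tf :: "(real \<Rightarrow> real) \<Rightarrow> real \<Rightarrow> real \<Rightarrow> 'd \<Rightarrow> nat \<Rightarrow> real^'d::finite \<Rightarrow> real" where
  "Tf \<rho> x0 c i0 K x = (if K = 1 then x $ i0 - c
      else (Pm \<rho> x0 ^^ (K - 2)) (\<rho> (x $ i0 - c + x0)) - \<rho> x0)"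

lemma sum_coord: "(\<Sum>k\<in>UNIV. (if k = i0 then a else 0) * (x::real^'d::finite) $ k) = a * x $ i0"
proof -
  have "(\<Sum>k\<in>UNIV. (if k = i0 then a else 0) * x $ k) = (\<Sum>k\<in>UNIV. if k = i0 then a * x $ i0 else 0)"
    by (rule sum.cong) auto
  also have "\<dots> = a * x $ i0" by (simp add: sum.delta)
  finally show ?thesis .
qed

lemma in_RNN:
  assumes "Ns \<noteq> []" "\<forall>m\<in>set Ns. m \<ge> 1" "last Ns \<ge> 2 \<or> w1 = 0"
  shows "(\<lambda>x::real^'d::finite. w0 * \<rho> (n * Tf \<rho> x0 c i0 (length Ns) x + e0)
           + w1 * \<rho> (n * Tf \<rho> x0 c i0 (length Ns) x + e1)) \<in> RNN \<rho> Ns"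
proof (cases "length Ns = 1")
  case True
  then obtain m where Ns: "Ns = [m]" by (cases Ns) auto
  have m: "m \<ge> 1" "m \<ge> 2 \<or> w1 = 0" using assms Ns by auto
  define out where "out = ((\<lambda>i j. if j = 0 then w0 else if j = 1 then w1 else 0, \<lambda>i. 0) :: layer)"
  define \<Phi> where "\<Phi> = ((((\<lambda>i k. if k = i0 then n else 0, \<lambda>i. (if i = 0 then e0 else e1) - n * c)), [out]) :: 'd network)"
  have "realize \<rho> Ns \<Phi> = (\<lambda>x. w0 * \<rho> (n * Tf \<rho> x0 c i0 (length Ns) x + e0)
           + w1 * \<rho> (n * Tf \<rho> x0 c i0 (length Ns) x + e1))"
  proof
    fix x :: "real^'d"
    have "realize \<rho> Ns \<Phi> x = apply_layers \<rho> [m] [out] (\<lambda>i. \<rho> (n * x $ i0 + ((if i = 0 then e0 else e1) - n * c))) 0"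
      by (simp add: realize_def \<Phi>_def Ns sum_coord)
    also have "\<dots> = w0 * \<rho> (n * x $ i0 + (e0 - n * c)) + w1 * \<rho> (n * x $ i0 + (e1 - n * c))"
      unfolding out_def by (subst final_layer[OF m]) simp
    finally show "realize \<rho> Ns \<Phi> x = w0 * \<rho> (n * Tf \<rho> x0 c i0 (length Ns) x + e0)
           + w1 * \<rho> (n * Tf \<rho> x0 c i0 (length Ns) x + e1)"
      by (simp add: Tf_def Ns algebra_simps)
  qed
  moreover have "length (snd \<Phi>) = length Ns" by (simp add: \<Phi>_def Ns)
  ultimately show ?thesis unfolding RNN_def by (intro CollectI exI[of _ \<Phi>]) simp
next
  case False
  then have len: "length Ns \<ge> 2" using assms by (cases Ns) (auto simp: Suc_le_eq)
  obtain ls where ls: "length ls = length Ns" and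
    eq: "\<And>v. apply_layers \<rho> Ns ls v 0 =
      w0 * \<rho> (n * ((Pm \<rho> x0 ^^ (length Ns - 2)) (v 0) - \<rho> x0) + e0)
    + w1 * \<rho> (n * ((Pm \<rho> x0 ^^ (length Ns - 2)) (v 0) - \<rho> x0) + e1)"
    using mid_layers[OF len assms(2,3)] by blast
  define \<Phi> where "\<Phi> = ((((\<lambda>i k. if k = i0 then 1 else 0, \<lambda>i. x0 - c)), ls) :: 'd network)"
  have "realize \<rho> Ns \<Phi> = (\<lambda>x. w0 * \<rho> (n * Tf \<rho> x0 c i0 (length Ns) x + e0)
           + w1 * \<rho> (n * Tf \<rho> x0 c i0 (length Ns) x + e1))"
  proof
    fix x :: "real^'d"
    have "realize \<rho> Ns \<Phi> x = apply_layers \<rho> Ns ls (\<lambda>i. \<rho> (x $ i0 - c + x0)) 0"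
      by (simp add: realize_def \<Phi>_def sum_coord, simp add: algebra_simps)
    then show "realize \<rho> Ns \<Phi> x = w0 * \<rho> (n * Tf \<rho> x0 c i0 (length Ns) x + e0)
           + w1 * \<rho> (n * Tf \<rho> x0 c i0 (length Ns) x + e1)"
      using False by (simp add: eq Tf_def)
  qed
  moreover have "length (snd \<Phi>) = length Ns" by (simp add: \<Phi>_def ls)
  ultimately show ?thesis unfolding RNN_def by (intro CollectI exI[of _ \<Phi>]) simp
qed

lemma Pm_sgn:
  fixes \<rho> :: "real \<Rightarrow> real"
  assumes st: "\<forall>y. (y < x0 \<longrightarrow> \<rho> y < \<rho> x0) \<and> (x0 < y \<longrightarrow> \<rho> x0 < \<rho> y)"
  shows "sgn (\<rho> (t + x0) - \<rho> x0) = sgn t"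
proof -
  consider "t < 0" | "t = 0" | "t > 0" by linarith
  then show ?thesis
  proof cases
    case 1 then show ?thesis using st[rule_format, of "t + x0"] by auto
  next
    case 2 then show ?thesis by simp
  next
    case 3 then show ?thesis using st[rule_format, of "t + x0"] by auto
  qed
qed

lemma Pm_iter_sgn:
  assumes st: "\<forall>y. (y < x0 \<longrightarrow> \<rho> y < \<rho> x0) \<and> (x0 < y \<longrightarrow> \<rho> x0 < \<rho> y)"
  shows "sgn ((Pm \<rho> x0 ^^ k) u - \<rho> x0) = sgn (u - \<rho> x0)"
proof (induction k)
  case 0 then show ?case by simp
next
  case (Suc k)
  have "sgn ((Pm \<rho> x0 ^^ Suc k) u - \<rho> x0) = sgn (\<rho> (((Pm \<rho> x0 ^^ k) u - \<rho> x0) + x0) - \<rho> x0)"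
    by (simp add: Pm_def)
  also have "\<dots> = sgn ((Pm \<rho> x0 ^^ k) u - \<rho> x0)" by (rule Pm_sgn[OF st])
  finally show ?case using Suc by simp
qed

lemma Tf_sgn:
  assumes st: "\<forall>y. (y < x0 \<longrightarrow> \<rho> y < \<rho> x0) \<and> (x0 < y \<longrightarrow> \<rho> x0 < \<rho> y)"
  shows "sgn (Tf \<rho> x0 c i0 K x) = sgn (x $ i0 - c)"
proof (cases "K = 1")
  case True then show ?thesis by (simp add: Tf_def)
next
  case False
  then have "sgn (Tf \<rho> x0 c i0 K x) = sgn (\<rho> ((x $ i0 - c) + x0) - \<rho> x0)"
    by (simp add: Tf_def Pm_iter_sgn[OF st])
  also have "\<dots> = sgn (x $ i0 - c)" by (rule Pm_sgn[OF st])
  finally show ?thesis .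
qed


lemma coord_uncountable:
  fixes S :: "(real^'d::finite) set"
  assumes "uncountable S"
  shows "\<exists>i. uncountable ((\<lambda>x. x $ i) ` S)"
proof (rule ccontr)
  assume "\<not> ?thesis"
  then have c: "\<And>i. countable ((\<lambda>x. x $ i) ` S)" by auto
  have "vec_nth ` S \<subseteq> Pi\<^sub>E UNIV (\<lambda>i. (\<lambda>x. x $ i) ` S)"
    by (auto simp: PiE_UNIV_domain)
  moreover have "countable (Pi\<^sub>E UNIV (\<lambda>i. (\<lambda>x. x $ i) ` S))"
    by (rule countable_PiE) (auto intro: c)
  ultimately have "countable (vec_nth ` S)" by (rule countable_subset)
  moreover have "inj_on vec_nth S" by (auto simp: inj_on_def vec_eq_iff)
  ultimately have "countable S" by (rule countable_image_inj_on)
  then show False using assms by simp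
qed

lemma two_sided:
  fixes S :: "(real^'d::finite) set"
  assumes "uncountable S"
  shows "\<exists>i y. y \<in> S \<and> (\<forall>U. open U \<and> y \<in> U \<longrightarrow>
            (\<exists>z\<in>S \<inter> U. z $ i < y $ i) \<and> (\<exists>z\<in>S \<inter> U. y $ i < z $ i))"
proof -
  obtain i where i: "uncountable ((\<lambda>x. x $ i) ` S)" using coord_uncountable[OF assms] by blast
  obtain Bs :: "(real^'d) set set" where Bc: "countable Bs" and Bt: "topological_basis Bs"
    using ex_countable_basis by blast
  define P where "P = (\<lambda>x::real^'d. x $ i)"
  define Lb where "Lb = {y\<in>S. \<exists>U. open U \<and> y \<in> U \<and> (\<forall>z\<in>S \<inter> U. y $ i \<le> z $ i)}"
  define Rb where "Rb = {y\<in>S. \<exists>U. open U \<and> y \<in> U \<and> (\<forall>z\<in>S \<inter> U. z $ i \<le> y $ i)}"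
  have L: "P ` Lb \<subseteq> (\<lambda>b. Inf (P ` (S \<inter> b))) ` Bs"
  proof
    fix t assume "t \<in> P ` Lb"
    then obtain y U where y: "t = P y" "y \<in> S" "open U" "y \<in> U" "\<forall>z\<in>S \<inter> U. y $ i \<le> z $ i"
      unfolding Lb_def by blast
    obtain b where b: "b \<in> Bs" "y \<in> b" "b \<subseteq> U" using topological_basisE[OF Bt y(3,4)] by blast
    have "Inf (P ` (S \<inter> b)) = P y"
      by (rule cInf_eq_minimum) (use y b in \<open>auto simp: P_def\<close>)
    then show "t \<in> (\<lambda>b. Inf (P ` (S \<inter> b))) ` Bs" using b y by force
  qed
  have R: "P ` Rb \<subseteq> (\<lambda>b. Sup (P ` (S \<inter> b))) ` Bs"
  proof
    fix t assume "t \<in> P ` Rb"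
    then obtain y U where y: "t = P y" "y \<in> S" "open U" "y \<in> U" "\<forall>z\<in>S \<inter> U. z $ i \<le> y $ i"
      unfolding Rb_def by blast
    obtain b where b: "b \<in> Bs" "y \<in> b" "b \<subseteq> U" using topological_basisE[OF Bt y(3,4)] by blast
    have "Sup (P ` (S \<inter> b)) = P y"
      by (rule cSup_eq_maximum) (use y b in \<open>auto simp: P_def\<close>)
    then show "t \<in> (\<lambda>b. Sup (P ` (S \<inter> b))) ` Bs" using b y by force
  qed
  have cL: "countable (P ` Lb)" by (rule countable_subset[OF L]) (simp add: Bc)
  have cR: "countable (P ` Rb)" by (rule countable_subset[OF R]) (simp add: Bc)
  have "P ` S - (P ` Lb \<union> P ` Rb) \<noteq> {}"
  proof
    assume "P ` S - (P ` Lb \<union> P ` Rb) = {}"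
    then have "P ` S \<subseteq> P ` Lb \<union> P ` Rb" by blast
    then have "countable (P ` S)" by (rule countable_subset) (simp add: cL cR)
    then show False using i by (simp add: P_def)
  qed
  then obtain y where y: "y \<in> S" "P y \<notin> P ` Lb" "P y \<notin> P ` Rb" by blast
  then have "y \<notin> Lb" "y \<notin> Rb" by auto
  then have "\<forall>U. open U \<and> y \<in> U \<longrightarrow>
            (\<exists>z\<in>S \<inter> U. z $ i < y $ i) \<and> (\<exists>z\<in>S \<inter> U. y $ i < z $ i)"
    using y(1) unfolding Lb_def Rb_def by (auto simp: not_le)
  then show ?thesis using y(1) by blast
qed

lemma bounded_lims:
  fixes G :: "real \<Rightarrow> real"
  assumes "continuous_on UNIV G" "(G \<longlongrightarrow> a) at_top" "(G \<longlongrightarrow> b) at_bot"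
  shows "\<exists>M. \<forall>y. \<bar>G y\<bar> \<le> M"
proof -
  have "eventually (\<lambda>y. dist (G y) a < 1) at_top" using tendstoD[OF assms(2)] by simp
  then obtain R1 where R1: "\<And>y. y \<ge> R1 \<Longrightarrow> dist (G y) a < 1" by (auto simp: eventually_at_top_linorder)
  have "eventually (\<lambda>y. dist (G y) b < 1) at_bot" using tendstoD[OF assms(3)] by simp
  then obtain R2 where R2: "\<And>y. y \<le> R2 \<Longrightarrow> dist (G y) b < 1" by (auto simp: eventually_at_bot_linorder)
  have "compact (G ` {R2..R1})"
    by (rule compact_continuous_image) (auto intro: continuous_on_subset[OF assms(1)])
  then obtain K where K: "\<And>z. z \<in> G ` {R2..R1} \<Longrightarrow> norm z \<le> K"
    using compact_imp_bounded bounded_iff by metis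
  show ?thesis
  proof (intro exI allI)
    fix y
    show "\<bar>G y\<bar> \<le> max K (max (\<bar>a\<bar> + 1) (\<bar>b\<bar> + 1))"
    proof (cases "y \<ge> R1")
      case True then show ?thesis using R1[of y] by (auto simp: dist_real_def)
    next
      case False
      show ?thesis
      proof (cases "y \<le> R2")
        case True then show ?thesis using R2[of y] by (auto simp: dist_real_def)
      next
        case False2: False
        then show ?thesis using K[of "G y"] False by auto
      qed
    qed
  qed
qed


lemma main_abstract:
  fixes \<mu> :: "(real^'d::finite) measure" and \<rho> :: "real \<Rightarrow> real"
  assumes rc: "continuous_on UNIV \<rho>"
    and st: "\<forall>y. (y < x0 \<longrightarrow> \<rho> y < \<rho> x0) \<and> (x0 < y \<longrightarrow> \<rho> x0 < \<rho> y)"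
    and limp: "((\<lambda>y. w0 * \<rho> (y + e0) + w1 * \<rho> (y + e1)) \<longlongrightarrow> Lp) at_top"
    and limm: "((\<lambda>y. w0 * \<rho> (y + e0) + w1 * \<rho> (y + e1)) \<longlongrightarrow> Lm) at_bot"
    and LL: "Lp \<noteq> Lm"
    and sets: "sets \<mu> = sets borel" and fin: "finite_measure \<mu>"
    and unc: "uncountable (support \<mu>)"
    and Ns: "Ns \<noteq> []" "\<forall>m\<in>set Ns. m \<ge> 1" "last Ns \<ge> 2 \<or> w1 = 0"
    and p: "p > 0"
  shows "\<not> Lp_closed \<mu> p (RNN \<rho> Ns)"
proof
  assume cl: "Lp_closed \<mu> p (RNN \<rho> Ns)"
  define G where "G = (\<lambda>y. w0 * \<rho> (y + e0) + w1 * \<rho> (y + e1))"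
  have Gc: "continuous_on UNIV G" unfolding G_def
    by (intro continuous_intros continuous_on_compose2[OF rc]) auto
  obtain M where M: "\<And>y. \<bar>G y\<bar> \<le> M"
    using bounded_lims[OF Gc limp[folded G_def] limm[folded G_def]] by blast
  obtain i0 y where y: "y \<in> support \<mu>" and ys: "\<And>U. open U \<Longrightarrow> y \<in> U \<Longrightarrow>
            (\<exists>z\<in>support \<mu> \<inter> U. z $ i0 < y $ i0) \<and> (\<exists>z\<in>support \<mu> \<inter> U. y $ i0 < z $ i0)"
    using two_sided[OF unc] by blast
  define c where "c = y $ i0"
  define T where "T = Tf \<rho> x0 c i0 (length Ns)"
  have Tsgn: "\<And>x. sgn (T x) = sgn (x $ i0 - c)" unfolding T_def by (rule Tf_sgn[OF st])
  define g where "g = (\<lambda>n::nat. \<lambda>x. G (real n * T x))"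
  define f where "f = (\<lambda>x::real^'d. if x $ i0 > c then Lp else if x $ i0 < c then Lm else G 0)"
  have gR: "\<And>n. g n \<in> RNN \<rho> Ns"
    unfolding g_def G_def T_def by (rule in_RNN[OF Ns])
  have space: "space \<mu> = UNIV" using sets_eq_imp_space_eq[OF sets] by simp
  have conv: "\<And>x. (\<lambda>n. g n x) \<longlonglongrightarrow> f x"
  proof -
    fix x
    consider "x $ i0 > c" | "x $ i0 < c" | "x $ i0 = c" by linarith
    then show "(\<lambda>n. g n x) \<longlonglongrightarrow> f x"
    proof cases
      case 1
      then have "T x > 0" using Tsgn[of x] by (simp add: sgn_real_def split: if_splits)
      then have "filterlim (\<lambda>n. T x * real n) at_top sequentially"
        by (intro filterlim_tendsto_pos_mult_at_top[OF tendsto_const] filterlim_real_sequentially)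
      then have "filterlim (\<lambda>n. real n * T x) at_top sequentially" by (simp add: mult.commute)
      from filterlim_compose[OF limp[folded G_def] this] show ?thesis
        using 1 by (simp add: g_def f_def)
    next
      case 2
      then have "T x < 0" using Tsgn[of x] by (simp add: sgn_real_def split: if_splits)
      then have "filterlim (\<lambda>n. T x * real n) at_bot sequentially"
        by (intro filterlim_tendsto_neg_mult_at_bot[OF tendsto_const] filterlim_real_sequentially)
      then have "filterlim (\<lambda>n. real n * T x) at_bot sequentially" by (simp add: mult.commute)
      from filterlim_compose[OF limm[folded G_def] this] show ?thesis
        using 2 by (simp add: g_def f_def)
    next
      case 3
      then have "T x = 0" using Tsgn[of x] by (simp add: sgn_real_def split: if_splits)
      then show ?thesis using 3 by (simp add: g_def f_def)
    qed
  qed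
  have gM: "\<And>n x. \<bar>g n x\<bar> \<le> M" unfolding g_def using M by simp
  have fM: "\<And>x. \<bar>f x\<bar> \<le> M"
    by (rule LIMSEQ_le_const2[OF tendsto_rabs[OF conv]]) (use gM in auto)
  have gmeas: "\<And>n. g n \<in> borel_measurable \<mu>"
    using RNN_cont[OF rc gR] borel_measurable_continuous_onI measurable_cong_sets[OF sets refl] by blast
  have fmeas: "f \<in> borel_measurable \<mu>"
  proof -
    have "f \<in> borel_measurable borel" unfolding f_def by measurable
    then show ?thesis using measurable_cong_sets[OF sets refl] by blast
  qed
  have finite_sp: "emeasure \<mu> (space \<mu>) < \<infinity>"
    using finite_measure.emeasure_finite[OF fin] by (simp add: top.not_eq_extremum)
  have fint: "(\<integral>\<^sup>+ x. ennreal (\<bar>f x\<bar> powr p) \<partial>\<mu>) < \<infinity>"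
  proof -
    have "(\<integral>\<^sup>+ x. ennreal (\<bar>f x\<bar> powr p) \<partial>\<mu>) \<le> (\<integral>\<^sup>+ x. ennreal (M powr p) \<partial>\<mu>)"
      by (intro nn_integral_mono ennreal_leI powr_mono2) (use p fM in auto)
    also have "\<dots> = ennreal (M powr p) * emeasure \<mu> (space \<mu>)" by simp
    also have "\<dots> < \<infinity>" using finite_sp by (simp add: ennreal_mult_less_top)
    finally show ?thesis .
  qed
  have lim: "(\<lambda>n. \<integral>\<^sup>+ x. ennreal (\<bar>g n x - f x\<bar> powr p) \<partial>\<mu>) \<longlonglongrightarrow> 0"
  proof -
    have "(\<lambda>n. \<integral>\<^sup>+ x. ennreal (\<bar>g n x - f x\<bar> powr p) \<partial>\<mu>) \<longlonglongrightarrow> (\<integral>\<^sup>+ x. 0 \<partial>\<mu>)"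
    proof (rule nn_integral_dominated_convergence[where w = "\<lambda>x. ennreal ((2 * M) powr p)"])
      show "\<And>n. (\<lambda>x. ennreal (\<bar>g n x - f x\<bar> powr p)) \<in> borel_measurable \<mu>"
        using gmeas fmeas by measurable
      show "(\<lambda>x. 0) \<in> borel_measurable \<mu>" by simp
      show "(\<lambda>x. ennreal ((2 * M) powr p)) \<in> borel_measurable \<mu>" by simp
      show "\<And>j. AE x in \<mu>. ennreal (\<bar>g j x - f x\<bar> powr p) \<le> ennreal ((2 * M) powr p)"
      proof (intro AE_I2 ennreal_leI powr_mono2)
        fix j x
        show "\<bar>g j x - f x\<bar> \<le> 2 * M" using gM[of j x] fM[of x] by linarith
      qed (use p in auto)
      show "(\<integral>\<^sup>+ x. ennreal ((2 * M) powr p) \<partial>\<mu>) < \<infinity>"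
        using finite_sp by (simp add: ennreal_mult_less_top)
      show "AE x in \<mu>. (\<lambda>n. ennreal (\<bar>g n x - f x\<bar> powr p)) \<longlonglongrightarrow> 0"
      proof (intro AE_I2)
        fix x
        have "(\<lambda>n. \<bar>g n x - f x\<bar>) \<longlonglongrightarrow> 0"
          using tendsto_rabs[OF tendsto_diff[OF conv[of x] tendsto_const[of "f x"]]] by simp
        then have "(\<lambda>n. \<bar>g n x - f x\<bar> powr p) \<longlonglongrightarrow> 0"
          by (intro tendsto_zero_powrI[OF _ tendsto_const]) (use p in auto)
        then show "(\<lambda>n. ennreal (\<bar>g n x - f x\<bar> powr p)) \<longlonglongrightarrow> 0"
          using tendsto_ennrealI by fastforce
      qed
    qed
    then show ?thesis by simp
  qed
  obtain h where hR: "h \<in> RNN \<rho> Ns" and hae: "AE x in \<mu>. h x = f x"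
    using cl fmeas fint lim gR unfolding Lp_closed_def by blast
  have hc: "continuous_on UNIV h" by (rule RNN_cont[OF rc hR])
  obtain N where N: "{x \<in> space \<mu>. \<not> h x = f x} \<subseteq> N" "emeasure \<mu> N = 0" "N \<in> sets \<mu>"
    using AE_E[OF hae] by blast
  have near: "\<exists>x\<in>U. h x = L" if U: "open U" "y \<in> U" and
      side: "\<exists>z\<in>support \<mu> \<inter> U. Q (z $ i0)" and oQ: "open {x::real^'d. Q (x $ i0)}"
      and fL: "\<And>x. Q (x $ i0) \<Longrightarrow> f x = L" for U L Q
  proof -
    obtain z where z: "z \<in> support \<mu>" "z \<in> U" "Q (z $ i0)" using side by blast
    define V where "V = U \<inter> {x. Q (x $ i0)}"
    have oV: "open V" unfolding V_def using U oQ by auto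
    have "emeasure \<mu> V > 0" using z oV unfolding support_def V_def by auto
    moreover have Vs: "V \<in> sets \<mu>" using oV sets by simp
    ultimately have "\<not> V \<subseteq> N"
      using N emeasure_mono[of V N \<mu>] by auto
    then obtain x where "x \<in> V" "x \<notin> N" by blast
    then have "x \<in> U" "h x = f x" "Q (x $ i0)" using N(1) space unfolding V_def by auto
    then show ?thesis using fL by auto
  qed
  have at_y: "h y = L" if H: "\<And>U. open U \<Longrightarrow> y \<in> U \<Longrightarrow> \<exists>x\<in>U. h x = L" for L
  proof (rule ccontr)
    assume ne: "h y \<noteq> L"
    define U where "U = h -` ball (h y) (dist (h y) L)"
    have "open U" unfolding U_def using hc by (simp add: open_vimage)
    moreover have "y \<in> U" using ne by (simp add: U_def)
    ultimately obtain x where "x \<in> U" "h x = L" using H by blast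
    then show False by (simp add: U_def dist_commute)
  qed
  have oL: "open {x::real^'d. x $ i0 < c}"
    by (rule open_Collect_less) (auto intro: continuous_intros)
  have oR: "open {x::real^'d. c < x $ i0}"
    by (rule open_Collect_less) (auto intro: continuous_intros)
  have "h y = Lm"
    by (rule at_y, rule near[where Q = "\<lambda>t. t < c"]) (use ys oL in \<open>auto simp: f_def c_def\<close>)
  moreover have "h y = Lp"
    by (rule at_y, rule near[where Q = "\<lambda>t. c < t"]) (use ys oR in \<open>auto simp: f_def c_def\<close>)
  ultimately show False using LL by simp
qed


lemma strict_at:
  fixes \<rho> :: "real \<Rightarrow> real"
  assumes m: "mono \<rho>" and d: "(\<rho> has_real_derivative D) (at x0)" and D: "D \<noteq> 0"
  shows "\<forall>y. (y < x0 \<longrightarrow> \<rho> y < \<rho> x0) \<and> (x0 < y \<longrightarrow> \<rho> x0 < \<rho> y)"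
proof -
  have Dp: "D > 0"
  proof (rule ccontr)
    assume "\<not> D > 0"
    then have "D < 0" using D by simp
    then obtain e where e: "e > 0" "\<And>h. h > 0 \<Longrightarrow> h < e \<Longrightarrow> \<rho> x0 > \<rho> (x0 + h)"
      using DERIV_neg_dec_right[OF d] by blast
    have "\<rho> x0 > \<rho> (x0 + e/2)" using e by simp
    moreover have "\<rho> x0 \<le> \<rho> (x0 + e/2)" using e by (intro monoD[OF m]) simp
    ultimately show False by simp
  qed
  obtain e1 where e1: "e1 > 0" "\<And>h. h > 0 \<Longrightarrow> h < e1 \<Longrightarrow> \<rho> x0 < \<rho> (x0 + h)"
    using DERIV_pos_inc_right[OF d Dp] by blast
  obtain e2 where e2: "e2 > 0" "\<And>h. h > 0 \<Longrightarrow> h < e2 \<Longrightarrow> \<rho> (x0 - h) < \<rho> x0"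
    using DERIV_pos_inc_left[OF d Dp] by blast
  show ?thesis
  proof (intro allI conjI impI)
    fix y assume "y < x0"
    define h where "h = min (e2/2) (x0 - y)"
    have "\<rho> (x0 - h) < \<rho> x0" using e2 \<open>y < x0\<close> by (intro e2(2)) (simp_all add: h_def)
    moreover have "\<rho> y \<le> \<rho> (x0 - h)" by (intro monoD[OF m]) (simp add: h_def)
    ultimately show "\<rho> y < \<rho> x0" by simp
  next
    fix y assume "x0 < y"
    define h where "h = min (e1/2) (y - x0)"
    have "\<rho> x0 < \<rho> (x0 + h)" using e1 \<open>x0 < y\<close> by (intro e1(2)) (simp_all add: h_def)
    moreover have "\<rho> (x0 + h) \<le> \<rho> y" by (intro monoD[OF m]) (simp add: h_def)
    ultimately show "\<rho> x0 < \<rho> y" by simp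
  qed
qed

lemma mono_lim_top:
  fixes \<rho> :: "real \<Rightarrow> real"
  assumes m: "mono \<rho>" and b: "bdd_above (range \<rho>)"
  shows "(\<rho> \<longlongrightarrow> Sup (range \<rho>)) at_top"
proof (rule order_tendstoI)
  fix a assume "a < Sup (range \<rho>)"
  then obtain z where z: "a < \<rho> z" using less_cSup_iff[of "range \<rho>"] b by auto
  show "eventually (\<lambda>x. a < \<rho> x) at_top"
    by (rule eventually_mono[OF eventually_ge_at_top[of z]]) (metis z m monoD less_le_trans)
next
  fix a assume "Sup (range \<rho>) < a"
  then show "eventually (\<lambda>x. \<rho> x < a) at_top"
    using cSup_upper[OF _ b] by (intro always_eventually allI) (metis le_less_trans rangeI)
qed

lemma mono_lim_bot:
  fixes \<rho> :: "real \<Rightarrow> real"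
  assumes m: "mono \<rho>" and b: "bdd_below (range \<rho>)"
  shows "(\<rho> \<longlongrightarrow> Inf (range \<rho>)) at_bot"
proof (rule order_tendstoI)
  fix a assume "Inf (range \<rho>) < a"
  then obtain z where z: "\<rho> z < a" using cInf_less_iff[of "range \<rho>"] b by auto
  show "eventually (\<lambda>x. \<rho> x < a) at_bot"
    by (rule eventually_mono[OF eventually_le_at_bot[of z]]) (metis z m monoD le_less_trans)
next
  fix a assume "a < Inf (range \<rho>)"
  then show "eventually (\<lambda>x. a < \<rho> x) at_bot"
    using cInf_lower[OF _ b] by (intro always_eventually allI) (metis less_le_trans rangeI)
qed

lemma mvt_lim_top:
  fixes \<rho> :: "real \<Rightarrow> real"
  assumes dif: "\<forall>x. \<bar>x\<bar> > r \<longrightarrow> \<rho> differentiable (at x)" and l: "(deriv \<rho> \<longlongrightarrow> l) at_top"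
  shows "((\<lambda>y. \<rho> (y + 1) - \<rho> y) \<longlongrightarrow> l) at_top"
proof (rule tendstoI)
  fix e :: real assume "e > 0"
  then obtain R where R: "\<And>z. z \<ge> R \<Longrightarrow> dist (deriv \<rho> z) l < e"
    using tendstoD[OF l] by (auto simp: eventually_at_top_linorder)
  have "\<forall>y\<ge>max R (\<bar>r\<bar> + 1). dist (\<rho> (y + 1) - \<rho> y) l < e"
  proof (intro allI impI)
    fix y assume y: "y \<ge> max R (\<bar>r\<bar> + 1)"
    have "\<And>x. y \<le> x \<Longrightarrow> x \<le> y + 1 \<Longrightarrow> DERIV \<rho> x :> deriv \<rho> x"
      using dif y by (subst DERIV_deriv_iff_real_differentiable) auto
    then obtain z where z: "y < z" "z < y + 1" "\<rho> (y + 1) - \<rho> y = (y + 1 - y) * deriv \<rho> z"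
      using MVT2[of y "y + 1" \<rho> "deriv \<rho>"] by auto
    then show "dist (\<rho> (y + 1) - \<rho> y) l < e" using R[of z] y by simp
  qed
  then show "eventually (\<lambda>y. dist (\<rho> (y + 1) - \<rho> y) l < e) at_top"
    unfolding eventually_at_top_linorder by (intro exI[of _ "max R (\<bar>r\<bar> + 1)"]) simp
qed

lemma mvt_lim_bot:
  fixes \<rho> :: "real \<Rightarrow> real"
  assumes dif: "\<forall>x. \<bar>x\<bar> > r \<longrightarrow> \<rho> differentiable (at x)" and l: "(deriv \<rho> \<longlongrightarrow> l) at_bot"
  shows "((\<lambda>y. \<rho> (y + 1) - \<rho> y) \<longlongrightarrow> l) at_bot"
proof (rule tendstoI)
  fix e :: real assume "e > 0"
  then obtain R where R: "\<And>z. z \<le> R \<Longrightarrow> dist (deriv \<rho> z) l < e"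
    using tendstoD[OF l] by (auto simp: eventually_at_bot_linorder)
  have "\<forall>y\<le>min (R - 1) (- \<bar>r\<bar> - 2). dist (\<rho> (y + 1) - \<rho> y) l < e"
  proof (intro allI impI)
    fix y assume y: "y \<le> min (R - 1) (- \<bar>r\<bar> - 2)"
    have "\<And>x. y \<le> x \<Longrightarrow> x \<le> y + 1 \<Longrightarrow> DERIV \<rho> x :> deriv \<rho> x"
      using dif y by (subst DERIV_deriv_iff_real_differentiable) auto
    then obtain z where z: "y < z" "z < y + 1" "\<rho> (y + 1) - \<rho> y = (y + 1 - y) * deriv \<rho> z"
      using MVT2[of y "y + 1" \<rho> "deriv \<rho>"] by auto
    then show "dist (\<rho> (y + 1) - \<rho> y) l < e" using R[of z] y by simp
  qed
  then show "eventually (\<lambda>y. dist (\<rho> (y + 1) - \<rho> y) l < e) at_bot"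
    unfolding eventually_at_bot_linorder by (intro exI[of _ "min (R - 1) (- \<bar>r\<bar> - 2)"]) simp
qed

lemma adm_main:
  fixes \<mu> :: "(real^'d::finite) measure" and \<rho> :: "real \<Rightarrow> real"
  assumes adm: "admissible_activation \<rho>"
    and sets: "sets \<mu> = sets borel" and fin: "finite_measure \<mu>"
    and unc: "uncountable (support \<mu>)"
    and Ns: "Ns \<noteq> []" "\<forall>m\<in>set Ns. m \<ge> 1" "last Ns \<ge> (if bounded (range \<rho>) then 1 else 2)"
    and p: "p > 0"
  shows "\<not> Lp_closed \<mu> p (RNN \<rho> Ns)"
proof -
  have rc: "continuous_on UNIV \<rho>" and m: "mono \<rho>" using adm by (auto simp: admissible_activation_def)
  obtain x0 D where d: "(\<rho> has_real_derivative D) (at x0)" "D \<noteq> 0"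
    using adm by (auto simp: admissible_activation_def)
  obtain r where dif: "\<forall>x. \<bar>x\<bar> > r \<longrightarrow> \<rho> differentiable (at x)"
    using adm by (auto simp: admissible_activation_def)
  have st: "\<forall>y. (y < x0 \<longrightarrow> \<rho> y < \<rho> x0) \<and> (x0 < y \<longrightarrow> \<rho> x0 < \<rho> y)"
    by (rule strict_at[OF m d])
  show ?thesis
  proof (cases "bounded (range \<rho>)")
    case True
    have ba: "bdd_above (range \<rho>)" and bb: "bdd_below (range \<rho>)"
      using True by (auto simp: bounded_imp_bdd_above bounded_imp_bdd_below)
    have lt: "((\<lambda>y. 1 * \<rho> (y + 0) + 0 * \<rho> (y + 0)) \<longlongrightarrow> Sup (range \<rho>)) at_top"
      using mono_lim_top[OF m ba] by simp
    have lb: "((\<lambda>y. 1 * \<rho> (y + 0) + 0 * \<rho> (y + 0)) \<longlongrightarrow> Inf (range \<rho>)) at_bot"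
      using mono_lim_bot[OF m bb] by simp
    have "Inf (range \<rho>) \<le> \<rho> (x0 - 1)" using bb by (simp add: cInf_lower)
    also have "\<dots> < \<rho> (x0 + 1)" using st[rule_format, of "x0 - 1"] st[rule_format, of "x0 + 1"] by linarith
    also have "\<dots> \<le> Sup (range \<rho>)" using ba by (simp add: cSup_upper)
    finally have ne: "Sup (range \<rho>) \<noteq> Inf (range \<rho>)" by simp
    show ?thesis
      by (rule main_abstract[OF rc st lt lb ne sets fin unc Ns(1,2)]) (use p in auto)
  next
    case False
    then obtain l1 l2 where l: "l1 \<noteq> l2" "(deriv \<rho> \<longlongrightarrow> l1) at_top" "(deriv \<rho> \<longlongrightarrow> l2) at_bot"
      using adm by (auto simp: admissible_activation_def)
    have lt: "((\<lambda>y. 1 * \<rho> (y + 1) + (-1) * \<rho> (y + 0)) \<longlongrightarrow> l1) at_top"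
      using mvt_lim_top[OF dif l(2)] by simp
    have lb: "((\<lambda>y. 1 * \<rho> (y + 1) + (-1) * \<rho> (y + 0)) \<longlongrightarrow> l2) at_bot"
      using mvt_lim_bot[OF dif l(3)] by simp
    show ?thesis
      by (rule main_abstract[OF rc st lt lb l(1) sets fin unc Ns(1,2)]) (use p Ns(3) False in auto)
  qed
qed


lemma adm_unb:
  fixes \<rho> :: "real \<Rightarrow> real"
  assumes "continuous_on UNIV \<rho>" "mono \<rho>" "(\<rho> has_real_derivative D) (at z)" "D \<noteq> 0"
    and r: "r > 0"
    and dp: "\<And>x. x > r \<Longrightarrow> (\<rho> has_real_derivative dp x) (at x)"
    and dm: "\<And>x. x < - r \<Longrightarrow> (\<rho> has_real_derivative dm x) (at x)"
    and lp: "(dp \<longlongrightarrow> la) at_top" and lm: "(dm \<longlongrightarrow> lb) at_bot"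
    and l: "la \<ge> 0" "lb \<ge> 0" "la \<noteq> lb"
  shows "admissible_activation \<rho>"
  unfolding admissible_activation_def
proof (intro conjI)
  show "\<exists>r>0. \<forall>x. r < \<bar>x\<bar> \<longrightarrow> \<rho> differentiable at x"
  proof (intro exI[of _ r] conjI allI impI)
    fix x :: real assume "r < \<bar>x\<bar>"
    then have "x > r \<or> x < - r" by linarith
    then show "\<rho> differentiable at x"
      using dp dm unfolding real_differentiable_def by blast
  qed (use r in auto)
  have "((deriv \<rho>) \<longlongrightarrow> la) at_top"
  proof -
    have "eventually (\<lambda>x. dp x = deriv \<rho> x) at_top"
      using eventually_gt_at_top[of r] by eventually_elim (metis dp DERIV_imp_deriv)
    then show ?thesis using lp tendsto_cong by blast
  qed
  moreover have "((deriv \<rho>) \<longlongrightarrow> lb) at_bot"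
  proof -
    have "eventually (\<lambda>x. dm x = deriv \<rho> x) at_bot"
      using eventually_gt_at_bot[of "-r"] by eventually_elim (metis dm DERIV_imp_deriv)
    then show ?thesis using lm tendsto_cong by blast
  qed
  ultimately show "bounded (range \<rho>) \<or> (\<exists>la lb. 0 \<le> la \<and> 0 \<le> lb \<and> la \<noteq> lb \<and>
      (deriv \<rho> \<longlongrightarrow> la) at_top \<and> (deriv \<rho> \<longlongrightarrow> lb) at_bot)"
    using l by blast
qed (use assms in auto)

lemma adm_bdd:
  fixes \<rho> :: "real \<Rightarrow> real"
  assumes "continuous_on UNIV \<rho>" "mono \<rho>" "(\<rho> has_real_derivative D) (at z)" "D \<noteq> 0"
    and "\<And>x. \<bar>x\<bar> > 1 \<Longrightarrow> \<rho> differentiable (at x)"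
    and "\<And>x. \<bar>\<rho> x\<bar> \<le> M"
  shows "admissible_activation \<rho>"
  unfolding admissible_activation_def
proof (intro conjI disjI1)
  show "bounded (range \<rho>)" unfolding bounded_iff using assms(6) by auto
  show "\<exists>r>0. \<forall>x. r < \<bar>x\<bar> \<longrightarrow> \<rho> differentiable at x"
    using assms(5) by (intro exI[of _ 1]) auto
qed (use assms in auto)

lemma deriv_loc:
  fixes g \<rho> :: "real \<Rightarrow> real"
  assumes "(g has_real_derivative D) (at x)" "open S" "x \<in> S" "\<And>y. y \<in> S \<Longrightarrow> g y = \<rho> y"
  shows "(\<rho> has_real_derivative D) (at x)"
  using has_field_derivative_transform_within_open[OF assms] .

lemma relu_adm: "admissible_activation relu"
proof (rule adm_unb[where D = 1 and z = 1 and r = 1 and dp = "\<lambda>_. 1" and dm = "\<lambda>_. 0"])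
  show "continuous_on UNIV relu" unfolding relu_def by (intro continuous_intros)
  show "mono relu" unfolding relu_def by (intro monoI) auto
  have p: "(relu has_real_derivative 1) (at x)" if "x > 0" for x
    by (rule deriv_loc[of "\<lambda>x. x" _ _ "{0<..}"]) (use that in \<open>auto simp: relu_def intro!: derivative_eq_intros\<close>)
  show "(relu has_real_derivative 1) (at 1)" by (rule p) simp
  show "\<And>x. x > 1 \<Longrightarrow> (relu has_real_derivative 1) (at x)" by (rule p) simp
  show "\<And>x. x < - 1 \<Longrightarrow> (relu has_real_derivative 0) (at x)"
    by (rule deriv_loc[of "\<lambda>x. 0" _ _ "{..<0}"]) (auto simp: relu_def intro!: derivative_eq_intros)
qed auto

lemma prelu_adm:
  assumes a: "a \<ge> 0" "a \<noteq> 1"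
  shows "admissible_activation (prelu a)"
proof (rule adm_unb[where D = "max a 1" and z = 1 and r = 1 and dp = "\<lambda>_. max a 1" and dm = "\<lambda>_. min a 1"
      and la = "max a 1" and lb = "min a 1"])
  show "continuous_on UNIV (prelu a)" unfolding prelu_def by (intro continuous_intros)
  show "mono (prelu a)" unfolding prelu_def
  proof (intro monoI)
    fix x y :: real assume "x \<le> y"
    then have "a * x \<le> a * y" using a by (simp add: mult_left_mono)
    then show "max (a * x) x \<le> max (a * y) y" using \<open>x \<le> y\<close> by linarith
  qed
  have pos: "prelu a y = max a 1 * y" if "y > 0" for y
    using that a by (cases "a \<le> 1") (auto simp: prelu_def max_def mult_right_mono)
  have neg: "prelu a y = min a 1 * y" if "y < 0" for y
    using that a by (cases "a \<le> 1") (auto simp: prelu_def max_def min_def mult_right_mono_neg)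
  have p: "(prelu a has_real_derivative max a 1) (at x)" if "x > 0" for x
    by (rule deriv_loc[of "\<lambda>x. max a 1 * x" _ _ "{0<..}"]) (use that pos in \<open>auto intro!: derivative_eq_intros\<close>)
  show "(prelu a has_real_derivative max a 1) (at 1)" by (rule p) simp
  show "\<And>x. x > 1 \<Longrightarrow> (prelu a has_real_derivative max a 1) (at x)" by (rule p) simp
  show "\<And>x. x < - 1 \<Longrightarrow> (prelu a has_real_derivative min a 1) (at x)"
    by (rule deriv_loc[of "\<lambda>x. min a 1 * x" _ _ "{..<0}"]) (use neg in \<open>auto intro!: derivative_eq_intros\<close>)
qed (use a in \<open>auto simp: max_def min_def\<close>)

lemma elu_alt: "elu x = max x 0 + exp (min x 0) - 1"
  by (simp add: elu_def max_def min_def)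

lemma elu_adm: "admissible_activation elu"
proof (rule adm_unb[where D = 1 and z = 1 and r = 1 and dp = "\<lambda>_. 1" and dm = exp])
  show "continuous_on UNIV elu" unfolding elu_alt[abs_def] by (intro continuous_intros)
  show "mono elu" unfolding elu_alt[abs_def]
  proof (intro monoI)
    fix x y :: real assume "x \<le> y"
    then have "exp (min x 0) \<le> exp (min y 0)" by simp
    then show "max x 0 + exp (min x 0) - 1 \<le> max y 0 + exp (min y 0) - 1" using \<open>x \<le> y\<close> by linarith
  qed
  have p: "(elu has_real_derivative 1) (at x)" if "x > 0" for x
    by (rule deriv_loc[of "\<lambda>x. x" _ _ "{0<..}"]) (use that in \<open>auto simp: elu_def intro!: derivative_eq_intros\<close>)
  show "(elu has_real_derivative 1) (at 1)" by (rule p) simp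
  show "\<And>x. x > 1 \<Longrightarrow> (elu has_real_derivative 1) (at x)" by (rule p) simp
  show "\<And>x. x < - 1 \<Longrightarrow> (elu has_real_derivative exp x) (at x)"
    by (rule deriv_loc[of "\<lambda>x. exp x - 1" _ _ "{..<0}"]) (auto simp: elu_def intro!: derivative_eq_intros)
  show "((exp :: real \<Rightarrow> real) \<longlongrightarrow> 0) at_bot" by (rule exp_at_bot)
qed auto


lemma one_exp_ne [simp]: "1 + exp (t::real) \<noteq> 0"
  using exp_gt_zero[of t] by linarith

lemma softsign_adm: "admissible_activation softsign"
proof (rule adm_bdd[where D = "1/4" and z = 1 and M = 1])
  show "continuous_on UNIV softsign" unfolding softsign_def[abs_def]
    by (intro continuous_intros) (auto simp: add_pos_nonneg)
  show "mono softsign" unfolding softsign_def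
  proof (intro monoI)
    fix x y :: real assume xy: "x \<le> y"
    have px: "0 < 1 + \<bar>x\<bar>" and py: "0 < 1 + \<bar>y\<bar>" by auto
    have "x * (1 + \<bar>y\<bar>) \<le> y * (1 + \<bar>x\<bar>)"
    proof (cases "x \<ge> 0")
      case True then show ?thesis using xy by (simp add: algebra_simps)
    next
      case False
      show ?thesis
      proof (cases "y \<ge> 0")
        case True
        have "x * (1 + \<bar>y\<bar>) \<le> 0" using False by (simp add: mult_nonpos_nonneg)
        moreover have "0 \<le> y * (1 + \<bar>x\<bar>)" using True by simp
        ultimately show ?thesis by linarith
      next
        case False2: False
        then show ?thesis using False xy by (simp add: algebra_simps)
      qed
    qed
    then show "x / (1 + \<bar>x\<bar>) \<le> y / (1 + \<bar>y\<bar>)" using px py by (simp add: field_simps)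
  qed
  have dpos: "((\<lambda>x. x / (1 + x)) has_real_derivative 1 / (1 + x)^2) (at x)" if "x > 0" for x :: real
    using that by (auto intro!: derivative_eq_intros simp: field_simps power2_eq_square)
  have pos: "(softsign has_real_derivative 1 / (1 + x)^2) (at x)" if "x > 0" for x :: real
    by (rule deriv_loc[OF dpos[OF that], of "{0<..}"]) (use that in \<open>auto simp: softsign_def\<close>)
  show "(softsign has_real_derivative 1 / 4) (at 1)" using pos[of 1] by simp
  show "\<And>x. \<bar>x\<bar> > 1 \<Longrightarrow> softsign differentiable (at x)"
  proof -
    fix x :: real assume "\<bar>x\<bar> > 1"
    then consider "x > 0" | "x < 0" by linarith
    then show "softsign differentiable (at x)"
    proof cases
      case 1 then show ?thesis using pos real_differentiable_def by blast
    next
      case 2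
      have "((\<lambda>x. x / (1 - x)) has_real_derivative 1 / (1 - x)^2) (at x)"
        using 2 by (auto intro!: derivative_eq_intros simp: field_simps power2_eq_square)
      then have "(softsign has_real_derivative 1 / (1 - x)^2) (at x)"
        by (rule deriv_loc[of _ _ _ "{..<0}"]) (use 2 in \<open>auto simp: softsign_def\<close>)
      then show ?thesis using real_differentiable_def by blast
    qed
  qed
  show "\<And>x. \<bar>softsign x\<bar> \<le> 1" by (simp add: softsign_def abs_divide)
qed simp

lemma sigmoid_deriv: "(sigmoid has_real_derivative exp (- x) / (1 + exp (- x))^2) (at x)"
  unfolding sigmoid_def[abs_def]
  by (auto intro!: derivative_eq_intros simp: field_simps power2_eq_square add_pos_pos)

lemma sigmoid_adm: "admissible_activation sigmoid"
proof (rule adm_bdd[where D = "1/4" and z = 0 and M = 1])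
  show "continuous_on UNIV sigmoid" unfolding sigmoid_def[abs_def]
    by (intro continuous_intros) (auto simp: add_pos_pos)
  show "mono sigmoid" unfolding sigmoid_def
  proof (intro monoI)
    fix x y :: real assume xy: "x \<le> y"
    then have "exp (- y) \<le> exp (- x)" by simp
    then show "1 / (1 + exp (- x)) \<le> 1 / (1 + exp (- y))"
      by (intro divide_left_mono) (auto simp: add_pos_pos)
  qed
  show "(sigmoid has_real_derivative 1/4) (at 0)" using sigmoid_deriv[of 0] by simp
  show "\<And>x. \<bar>x\<bar> > 1 \<Longrightarrow> sigmoid differentiable (at x)"
    using sigmoid_deriv real_differentiable_def by blast
  show "\<And>x. \<bar>sigmoid x\<bar> \<le> 1"
    by (simp add: sigmoid_def abs_divide add_pos_pos)
qed simp

lemma tanh_deriv: "((tanh :: real \<Rightarrow> real) has_real_derivative 1 - tanh x ^ 2) (at x)"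
  by (auto intro!: derivative_eq_intros)

lemma tanh_adm: "admissible_activation tanh"
proof (rule adm_bdd[where D = 1 and z = 0 and M = 1])
  show "continuous_on UNIV (tanh :: real \<Rightarrow> real)" by (intro continuous_intros) auto
  show "mono (tanh :: real \<Rightarrow> real)" by (intro monoI) simp
  show "(tanh has_real_derivative 1) (at 0)" using tanh_deriv[of 0] by simp
  show "\<And>x. \<bar>x\<bar> > 1 \<Longrightarrow> (tanh :: real \<Rightarrow> real) differentiable (at x)"
    using tanh_deriv real_differentiable_def by blast
  show "\<And>x::real. \<bar>tanh x\<bar> \<le> 1"
    using tanh_real_lt_1 tanh_real_gt_neg1 by (simp add: abs_le_iff less_imp_le)
qed simp

lemma arctan_adm: "admissible_activation arctan"
proof (rule adm_bdd[where D = 1 and z = 0 and M = "pi/2"])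
  show "continuous_on UNIV arctan" by (intro continuous_intros)
  show "mono arctan" by (intro monoI) (simp add: arctan_le_iff)
  show "(arctan has_real_derivative 1) (at 0)" using DERIV_arctan[of 0] by simp
  show "\<And>x. \<bar>x\<bar> > 1 \<Longrightarrow> arctan differentiable (at x)"
    using DERIV_arctan real_differentiable_def by blast
  show "\<bar>arctan x\<bar> \<le> pi/2" for x
    unfolding abs_le_iff using arctan_bounded[of x] by linarith
qed simp

lemma softplus_deriv: "(softplus has_real_derivative exp x / (1 + exp x)) (at x)"
  unfolding softplus_def[abs_def]
  by (auto intro!: derivative_eq_intros simp: add_pos_pos)

lemma softplus_adm: "admissible_activation softplus"
proof (rule adm_unb[where D = "1/2" and z = 0 and r = 1 and dp = "\<lambda>x. exp x / (1 + exp x)"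
      and dm = "\<lambda>x. exp x / (1 + exp x)" and la = 1 and lb = 0])
  show "continuous_on UNIV softplus" unfolding softplus_def[abs_def]
    by (intro continuous_intros) (auto simp: add_pos_pos)
  show "mono softplus" unfolding softplus_def
    by (intro monoI) (simp add: add_pos_pos)
  show "(softplus has_real_derivative 1/2) (at 0)" using softplus_deriv[of 0] by simp
  show "((\<lambda>x. exp x / (1 + exp x)) \<longlongrightarrow> (1::real)) at_top" by real_asymp
  show "((\<lambda>x. exp x / (1 + exp x)) \<longlongrightarrow> (0::real)) at_bot" by real_asymp
qed (auto intro: softplus_deriv)


lemma isru_alt:
  assumes a: "a > 0"
  shows "isru a x = (1 / sqrt a) * sin (arctan (sqrt a * x))"
proof -
  have "(sqrt a * x)^2 = a * x^2" using a by (simp add: power_mult_distrib)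
  then show ?thesis using a by (simp add: isru_def sin_arctan)
qed

definition isru_d :: "real \<Rightarrow> real \<Rightarrow> real" where
  "isru_d a x = cos (arctan (sqrt a * x)) * inverse (1 + (sqrt a * x)^2)"

lemma isru_deriv:
  assumes a: "a > 0"
  shows "(isru a has_real_derivative isru_d a x) (at x)"
proof -
  have "((\<lambda>x. (1 / sqrt a) * sin (arctan (sqrt a * x))) has_real_derivative isru_d a x) (at x)"
    using a by (auto intro!: derivative_eq_intros simp: isru_d_def mult.assoc)
  moreover have "(\<lambda>x. (1 / sqrt a) * sin (arctan (sqrt a * x))) = isru a"
    using isru_alt[OF a] by auto
  ultimately show ?thesis by simp
qed

lemma isru_cont: "a > 0 \<Longrightarrow> continuous_on UNIV (isru a)"
  using isru_alt[of a] by (simp add: fun_eq_iff[symmetric]) (intro continuous_intros, simp)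

lemma isru_mono:
  assumes a: "a > 0"
  shows "mono (isru a)"
proof (intro monoI)
  fix x y :: real assume xy: "x \<le> y"
  have "sqrt a * x \<le> sqrt a * y" using xy a by (simp add: mult_left_mono)
  then have "arctan (sqrt a * x) \<le> arctan (sqrt a * y)" by (simp add: arctan_le_iff)
  then have "sin (arctan (sqrt a * x)) \<le> sin (arctan (sqrt a * y))"
    using arctan_bounded[of "sqrt a * x"] arctan_bounded[of "sqrt a * y"]
    by (intro sin_monotone_2pi_le) auto
  then show "isru a x \<le> isru a y" using a by (simp add: isru_alt divide_right_mono)
qed

lemma isru_adm:
  assumes a: "a > 0"
  shows "admissible_activation (isru a)"
proof (rule adm_bdd[where D = 1 and z = 0 and M = "1 / sqrt a"])
  show "continuous_on UNIV (isru a)" by (rule isru_cont[OF a])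
  show "mono (isru a)" by (rule isru_mono[OF a])
  show "(isru a has_real_derivative 1) (at 0)" using isru_deriv[OF a, of 0] by (simp add: isru_d_def)
  show "\<And>x. \<bar>x\<bar> > 1 \<Longrightarrow> isru a differentiable (at x)"
    using isru_deriv[OF a] real_differentiable_def by blast
  show "\<bar>isru a x\<bar> \<le> 1 / sqrt a" for x
    using a abs_sin_le_one[of "arctan (sqrt a * x)"]
    by (simp add: isru_alt abs_mult divide_right_mono)
qed simp

lemma isrlu_alt: "isrlu a x = max x 0 + isru a (min x 0)"
  by (simp add: isrlu_def isru_def max_def min_def)

lemma isru_d_lim:
  assumes a: "a > 0"
  shows "(isru_d a \<longlongrightarrow> 0) at_bot"
proof -
  have e: "isru_d a = (\<lambda>x. 1 / sqrt (1 + (sqrt a * x)^2) * inverse (1 + (sqrt a * x)^2))"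
    by (simp add: isru_d_def cos_arctan fun_eq_iff)
  show ?thesis unfolding e using a by real_asymp
qed

lemma isrlu_adm:
  assumes a: "a > 0"
  shows "admissible_activation (isrlu a)"
proof (rule adm_unb[where D = 1 and z = 1 and r = 1 and dp = "\<lambda>_. 1" and dm = "isru_d a"
      and la = 1 and lb = 0])
  show "continuous_on UNIV (isrlu a)" unfolding isrlu_alt[abs_def]
    by (intro continuous_intros continuous_on_compose2[OF isru_cont[OF a]]) auto
  show "mono (isrlu a)" unfolding isrlu_alt[abs_def]
  proof (intro monoI)
    fix x y :: real assume xy: "x \<le> y"
    have "isru a (min x 0) \<le> isru a (min y 0)" using xy by (intro monoD[OF isru_mono[OF a]]) simp
    then show "max x 0 + isru a (min x 0) \<le> max y 0 + isru a (min y 0)" using xy by linarith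
  qed
  have p: "(isrlu a has_real_derivative 1) (at x)" if "x > 0" for x
    by (rule deriv_loc[of "\<lambda>x. x" _ _ "{0<..}"]) (use that in \<open>auto simp: isrlu_def intro!: derivative_eq_intros\<close>)
  show "(isrlu a has_real_derivative 1) (at 1)" by (rule p) simp
  show "\<And>x. x > 1 \<Longrightarrow> (isrlu a has_real_derivative 1) (at x)" by (rule p) simp
  show "\<And>x. x < - 1 \<Longrightarrow> (isrlu a has_real_derivative isru_d a x) (at x)"
    by (rule deriv_loc[OF isru_deriv[OF a], where S = "{..<0}"]) (auto simp: isrlu_def isru_def)
  show "(isru_d a \<longlongrightarrow> 0) at_bot" by (rule isru_d_lim[OF a])
qed auto

lemma listed_adm: "\<rho> \<in> listed_activations \<Longrightarrow> admissible_activation \<rho>"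
  unfolding listed_activations_def
  using relu_adm elu_adm softsign_adm sigmoid_adm tanh_adm arctan_adm softplus_adm
    prelu_adm isrlu_adm isru_adm by auto

theorem corollary3p2:
  shows "\<forall>\<rho>\<in>listed_activations.
     admissible_activation \<rho> \<and>
     (\<forall>(B::real) (\<mu>::(real^'d::finite) measure) (Ns::nat list) (p::real).
        B > 0 \<longrightarrow> sets \<mu> = sets borel \<longrightarrow> finite_measure \<mu> \<longrightarrow>
        emeasure \<mu> (- cube B) = 0 \<longrightarrow> uncountable (support \<mu>) \<longrightarrow>
        Ns \<noteq> [] \<longrightarrow> (\<forall>n\<in>set Ns. n \<ge> 1) \<longrightarrow>
        last Ns \<ge> (if bounded (range \<rho>) then 1 else 2) \<longrightarrow>
        p > 0 \<longrightarrow>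
        \<not> Lp_closed \<mu> p (RNN \<rho> Ns))"
proof (intro ballI conjI allI impI)
  fix \<rho> assume r: "\<rho> \<in> listed_activations"
  show "admissible_activation \<rho>" by (rule listed_adm[OF r])
  fix B :: real and \<mu> :: "(real^'d::finite) measure" and Ns :: "nat list" and p :: real
  assume "B > 0" "sets \<mu> = sets borel" "finite_measure \<mu>" "emeasure \<mu> (- cube B) = 0"
    "uncountable (support \<mu>)" "Ns \<noteq> []" "\<forall>n\<in>set Ns. n \<ge> 1"
    "last Ns \<ge> (if bounded (range \<rho>) then 1 else 2)" "p > 0"
  then show "\<not> Lp_closed \<mu> p (RNN \<rho> Ns)"
    using adm_main[OF listed_adm[OF r]] by blast
qed

end
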